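(* (Cut elimination and subformula property.) Every sequent derivable in D.BL (resp. D.CBL) has a derivation in D.BL (resp. D.CBL) that does not use the Cut rule, and D.BL and D.CBL have the subformula property: every formula occurring in a cut-free derivation is a subformula of a formula occurring in its end-sequent.
   Context: Calculus D.BL. Two types $1,2$; type-$i$ atoms $p_i,q_i,\dots$. Type-1 formulas: $A_1::=p_1\mid 1_1\mid 0_1\mid \mathrm{p}A_2\mid A_1\sqcap_1A_1\mid A_1\sqcup_1A_1$; type-2 formulas: $A_2::=p_2\mid 1_2\mid 0_2\mid \mathrm{n}A_1\mid A_2\sqcap_2A_2\mid A_2\sqcup_2A_2$ (subformulas are taken across types, e.g. $A_2$ is a subformula of $\mathrm{p}A_2$). Type-1 structures: $X_1::=A_1\mid \hat1_1\mid\check0_1\mid \mathrm{P}X_2\mid X_1\hat\sqcap_1X_1\mid X_1\check\sqcup_1X_1\mid X_1\check\sqsupset_1X_1\mid X_1\hat\sqsubset_1X_1$; type-2 structures analogously with index 2 and $\mathrm{N}X_1$ instead of $\mathrm{P}X_2$. Sequents $X_i\vdash Y_i$ have both sides of the same type. Rules (for $i\in\{1,2\}$; "$\Leftrightarrow$" = both directions): Display: $X\hat\sqcap_iY\vdash Z\Leftrightarrow X\vdash Y\check\sqsupset_iZ$; $X\vdash Y\check\sqcup_iZ\Leftrightarrow X\hat\sqsubset_iY\vdash Z$; $\mathrm{P}X_2\vdash Y_1\Leftrightarrow X_2\vdash \mathrm{N}Y_1$; $\mathrm{N}X_1\vdash Y_2\Leftrightarrow X_1\vdash\mathrm{P}Y_2$.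 Identity $p_i\vdash p_i$; Cut: from $X\vdash A$ and $A\vdash Y$ infer $X\vdash Y$. Structural: from $X\hat\sqcap_i\hat1_i\vdash Y$ infer $X\vdash Y$; from $X\vdash Y\check\sqcup_i\check0_i$ infer $X\vdash Y$; exchange (from $X\hat\sqcap_iY\vdash Z$ infer $Y\hat\sqcap_iX\vdash Z$; from $X\vdash Y\check\sqcup_iZ$ infer $X\vdash Z\check\sqcup_iY$); associativity (from $(X\hat\sqcap_iY)\hat\sqcap_iZ\vdash W$ infer $X\hat\sqcap_i(Y\hat\sqcap_iZ)\vdash W$; from $X\vdash(Y\check\sqcup_iZ)\check\sqcup_iW$ infer $X\vdash Y\check\sqcup_i(Z\check\sqcup_iW)$); weakening (from $X\vdash Z$ infer $X\hat\sqcap_iY\vdash Z$; from $X\vdash Y$ infer $X\vdash Y\check\sqcup_iZ$); contraction (from $X\hat\sqcap_iX\vdash Z$ infer $X\vdash Z$; from $X\vdash Y\check\sqcup_iY$ infer $X\vdash Y$). Operational: from $\hat1_i\vdash X$ infer $1_i\vdash X$; axiom $\hat1_i\vdash1_i$; axiom $0_i\vdash\check0_i$; from $X\vdash\check0_i$ infer $X\vdash0_i$; from $A\hat\sqcap_iB\vdash X$ infer $A\sqcap_iB\vdash X$; from $X\vdash A$ and $Y\vdash B$ infer $X\hat\sqcap_iY\vdash A\sqcap_iB$; from $A\vdash X$ and $B\vdash Y$ infer $A\sqcup_iB\vdash X\check\sqcup_iY$; from $X\vdash A\check\sqcup_iB$ infer $X\vdash A\sqcup_iB$. Multi-type structural: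 $X_1\vdash Y_1\Leftrightarrow\mathrm{N}X_1\vdash\mathrm{N}Y_1$; $X_2\vdash Y_2\Leftrightarrow\mathrm{P}X_2\vdash\mathrm{P}Y_2$; from $\check0_1\vdash X_1$ infer $\mathrm{P}\check0_2\vdash X_1$; from $X_1\vdash\hat1_1$ infer $X_1\vdash\mathrm{P}\hat1_2$. Multi-type operational: from $\mathrm{N}A_1\vdash X_2$ infer $\mathrm{n}A_1\vdash X_2$; from $X_2\vdash\mathrm{N}A_1$ infer $X_2\vdash\mathrm{n}A_1$; from $\mathrm{P}A_2\vdash X_1$ infer $\mathrm{p}A_2\vdash X_1$; from $X_1\vdash\mathrm{P}A_2$ infer $X_1\vdash\mathrm{p}A_2$. D.CBL adds formulas ${\sim}_iA_i$, structures $\ast_iX_i$, and rules: $\ast_iX\vdash Y\Leftrightarrow\ast_iY\vdash X$; $X\vdash\ast_iY\Leftrightarrow Y\vdash\ast_iX$; $X\vdash Y\Leftrightarrow\ast_iY\vdash\ast_iX$; from $\mathrm{N}\ast_1X_1\vdash Y_2$ infer $\ast_2\mathrm{N}X_1\vdash Y_2$; from $X_2\vdash\mathrm{N}\ast_1Y_1$ infer $X_2\vdash\ast_2\mathrm{N}Y_1$; from $\ast_iA\vdash Y$ infer ${\sim}_iA\vdash Y$; from $X\vdash\ast_iA$ infer $X\vdash{\sim}_iA$. A formula is regarded as a structure; derivations are finite trees of rule applications with axioms at the leaves. *)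

theory Defs
  imports Main
begin

text \<open>Atoms of each type are indexed by natural numbers. The negations Neg1/Neg2
 (formulas) and Star1/Star2 (structures) belong only to D.CBL; D.BL is the
 fragment without them.\<close>

datatype fm1 = At1 nat | One1 | Zero1 | Pf fm2 | Meet1 fm1 fm1 | Join1 fm1 fm1 | Neg1 fm1
and fm2 = At2 nat | One2 | Zero2 | Nf fm1 | Meet2 fm2 fm2 | Join2 fm2 fm2 | Neg2 fm2

datatype fm = T1 fm1 | T2 fm2

text \<open>Structures: F = formula, I = hat 1, O = check 0, P/N the multi-type structural
 connectives, SMeet = hat meet, SJoin = check join, SImp = check right arrow,
 SDif = hat left arrow, Star = asterisk.\<close>
datatype st1 = F1 fm1 | I1 | O1 | P st2 | SMeet1 st1 st1 | SJoin1 st1 st1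
   | SImp1 st1 st1 | SDif1 st1 st1 | Star1 st1
and st2 = F2 fm2 | I2 | O2 | N st1 | SMeet2 st2 st2 | SJoin2 st2 st2
   | SImp2 st2 st2 | SDif2 st2 st2 | Star2 st2

datatype seq = Sq1 st1 st1 | Sq2 st2 st2

primrec sub1 :: "fm1 \<Rightarrow> fm set" and sub2 :: "fm2 \<Rightarrow> fm set" where
  "sub1 (At1 p) = {T1 (At1 p)}"
| "sub1 One1 = {T1 One1}"
| "sub1 Zero1 = {T1 Zero1}"
| "sub1 (Pf A) = insert (T1 (Pf A)) (sub2 A)"
| "sub1 (Meet1 A B) = insert (T1 (Meet1 A B)) (sub1 A \<union> sub1 B)"
| "sub1 (Join1 A B) = insert (T1 (Join1 A B)) (sub1 A \<union> sub1 B)"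
| "sub1 (Neg1 A) = insert (T1 (Neg1 A)) (sub1 A)"
| "sub2 (At2 p) = {T2 (At2 p)}"
| "sub2 One2 = {T2 One2}"
| "sub2 Zero2 = {T2 Zero2}"
| "sub2 (Nf A) = insert (T2 (Nf A)) (sub1 A)"
| "sub2 (Meet2 A B) = insert (T2 (Meet2 A B)) (sub2 A \<union> sub2 B)"
| "sub2 (Join2 A B) = insert (T2 (Join2 A B)) (sub2 A \<union> sub2 B)"
| "sub2 (Neg2 A) = insert (T2 (Neg2 A)) (sub2 A)"

fun subfm :: "fm \<Rightarrow> fm set" where
  "subfm (T1 A) = sub1 A"
| "subfm (T2 A) = sub2 A"

primrec fmls1 :: "st1 \<Rightarrow> fm set" and fmls2 :: "st2 \<Rightarrow> fm set" where
  "fmls1 (F1 A) = {T1 A}"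
| "fmls1 I1 = {}"
| "fmls1 O1 = {}"
| "fmls1 (P X) = fmls2 X"
| "fmls1 (SMeet1 X Y) = fmls1 X \<union> fmls1 Y"
| "fmls1 (SJoin1 X Y) = fmls1 X \<union> fmls1 Y"
| "fmls1 (SImp1 X Y) = fmls1 X \<union> fmls1 Y"
| "fmls1 (SDif1 X Y) = fmls1 X \<union> fmls1 Y"
| "fmls1 (Star1 X) = fmls1 X"
| "fmls2 (F2 A) = {T2 A}"
| "fmls2 I2 = {}"
| "fmls2 O2 = {}"
| "fmls2 (N X) = fmls1 X"
| "fmls2 (SMeet2 X Y) = fmls2 X \<union> fmls2 Y"
| "fmls2 (SJoin2 X Y) = fmls2 X \<union> fmls2 Y"
| "fmls2 (SImp2 X Y) = fmls2 X \<union> fmls2 Y"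
| "fmls2 (SDif2 X Y) = fmls2 X \<union> fmls2 Y"
| "fmls2 (Star2 X) = fmls2 X"

fun fmls_seq :: "seq \<Rightarrow> fm set" where
  "fmls_seq (Sq1 X Y) = fmls1 X \<union> fmls1 Y"
| "fmls_seq (Sq2 X Y) = fmls2 X \<union> fmls2 Y"

primrec blf1 :: "fm1 \<Rightarrow> bool" and blf2 :: "fm2 \<Rightarrow> bool" where
  "blf1 (At1 p) = True"
| "blf1 One1 = True"
| "blf1 Zero1 = True"
| "blf1 (Pf A) = blf2 A"
| "blf1 (Meet1 A B) = (blf1 A \<and> blf1 B)"
| "blf1 (Join1 A B) = (blf1 A \<and> blf1 B)"
| "blf1 (Neg1 A) = False"
| "blf2 (At2 p) = True"
| "blf2 One2 = True"
| "blf2 Zero2 = True"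
| "blf2 (Nf A) = blf1 A"
| "blf2 (Meet2 A B) = (blf2 A \<and> blf2 B)"
| "blf2 (Join2 A B) = (blf2 A \<and> blf2 B)"
| "blf2 (Neg2 A) = False"

primrec bls1 :: "st1 \<Rightarrow> bool" and bls2 :: "st2 \<Rightarrow> bool" where
  "bls1 (F1 A) = blf1 A"
| "bls1 I1 = True"
| "bls1 O1 = True"
| "bls1 (P X) = bls2 X"
| "bls1 (SMeet1 X Y) = (bls1 X \<and> bls1 Y)"
| "bls1 (SJoin1 X Y) = (bls1 X \<and> bls1 Y)"
| "bls1 (SImp1 X Y) = (bls1 X \<and> bls1 Y)"
| "bls1 (SDif1 X Y) = (bls1 X \<and> bls1 Y)"
| "bls1 (Star1 X) = False"
| "bls2 (F2 A) = blf2 A"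
| "bls2 I2 = True"
| "bls2 O2 = True"
| "bls2 (N X) = bls1 X"
| "bls2 (SMeet2 X Y) = (bls2 X \<and> bls2 Y)"
| "bls2 (SJoin2 X Y) = (bls2 X \<and> bls2 Y)"
| "bls2 (SImp2 X Y) = (bls2 X \<and> bls2 Y)"
| "bls2 (SDif2 X Y) = (bls2 X \<and> bls2 Y)"
| "bls2 (Star2 X) = False"

fun bl_seq :: "seq \<Rightarrow> bool" where
  "bl_seq (Sq1 X Y) = (bls1 X \<and> bls1 Y)"
| "bl_seq (Sq2 X Y) = (bls2 X \<and> bls2 Y)"

inductive cut_rule :: "seq list \<Rightarrow> seq \<Rightarrow> bool" where
  "cut_rule [Sq1 X (F1 A), Sq1 (F1 A) Y] (Sq1 X Y)"
| "cut_rule [Sq2 X (F2 A), Sq2 (F2 A) Y] (Sq2 X Y)"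

inductive bl_rule :: "seq list \<Rightarrow> seq \<Rightarrow> bool" where
  "bl_rule [Sq1 (SMeet1 X Y) Z] (Sq1 X (SImp1 Y Z))"
| "bl_rule [Sq1 X (SImp1 Y Z)] (Sq1 (SMeet1 X Y) Z)"
| "bl_rule [Sq2 (SMeet2 X Y) Z] (Sq2 X (SImp2 Y Z))"
| "bl_rule [Sq2 X (SImp2 Y Z)] (Sq2 (SMeet2 X Y) Z)"
| "bl_rule [Sq1 X (SJoin1 Y Z)] (Sq1 (SDif1 X Y) Z)"
| "bl_rule [Sq1 (SDif1 X Y) Z] (Sq1 X (SJoin1 Y Z))"
| "bl_rule [Sq2 X (SJoin2 Y Z)] (Sq2 (SDif2 X Y) Z)"
| "bl_rule [Sq2 (SDif2 X Y) Z] (Sq2 X (SJoin2 Y Z))"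
| "bl_rule [Sq1 (P X2) Y1] (Sq2 X2 (N Y1))"
| "bl_rule [Sq2 X2 (N Y1)] (Sq1 (P X2) Y1)"
| "bl_rule [Sq2 (N X1) Y2] (Sq1 X1 (P Y2))"
| "bl_rule [Sq1 X1 (P Y2)] (Sq2 (N X1) Y2)"
| "bl_rule [] (Sq1 (F1 (At1 p)) (F1 (At1 p)))"
| "bl_rule [] (Sq2 (F2 (At2 p)) (F2 (At2 p)))"
| "bl_rule [Sq1 (SMeet1 X I1) Y] (Sq1 X Y)"
| "bl_rule [Sq2 (SMeet2 X I2) Y] (Sq2 X Y)"
| "bl_rule [Sq1 X (SJoin1 Y O1)] (Sq1 X Y)"
| "bl_rule [Sq2 X (SJoin2 Y O2)] (Sq2 X Y)"
| "bl_rule [Sq1 (SMeet1 X Y) Z] (Sq1 (SMeet1 Y X) Z)"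
| "bl_rule [Sq2 (SMeet2 X Y) Z] (Sq2 (SMeet2 Y X) Z)"
| "bl_rule [Sq1 X (SJoin1 Y Z)] (Sq1 X (SJoin1 Z Y))"
| "bl_rule [Sq2 X (SJoin2 Y Z)] (Sq2 X (SJoin2 Z Y))"
| "bl_rule [Sq1 (SMeet1 (SMeet1 X Y) Z) W] (Sq1 (SMeet1 X (SMeet1 Y Z)) W)"
| "bl_rule [Sq2 (SMeet2 (SMeet2 X Y) Z) W] (Sq2 (SMeet2 X (SMeet2 Y Z)) W)"
| "bl_rule [Sq1 X (SJoin1 (SJoin1 Y Z) W)] (Sq1 X (SJoin1 Y (SJoin1 Z W)))"
| "bl_rule [Sq2 X (SJoin2 (SJoin2 Y Z) W)] (Sq2 X (SJoin2 Y (SJoin2 Z W)))"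
| "bl_rule [Sq1 X Z] (Sq1 (SMeet1 X Y) Z)"
| "bl_rule [Sq2 X Z] (Sq2 (SMeet2 X Y) Z)"
| "bl_rule [Sq1 X Y] (Sq1 X (SJoin1 Y Z))"
| "bl_rule [Sq2 X Y] (Sq2 X (SJoin2 Y Z))"
| "bl_rule [Sq1 (SMeet1 X X) Z] (Sq1 X Z)"
| "bl_rule [Sq2 (SMeet2 X X) Z] (Sq2 X Z)"
| "bl_rule [Sq1 X (SJoin1 Y Y)] (Sq1 X Y)"
| "bl_rule [Sq2 X (SJoin2 Y Y)] (Sq2 X Y)"
| "bl_rule [Sq1 I1 X] (Sq1 (F1 One1) X)"
| "bl_rule [Sq2 I2 X] (Sq2 (F2 One2) X)"
| "bl_rule [] (Sq1 I1 (F1 One1))"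
| "bl_rule [] (Sq2 I2 (F2 One2))"
| "bl_rule [] (Sq1 (F1 Zero1) O1)"
| "bl_rule [] (Sq2 (F2 Zero2) O2)"
| "bl_rule [Sq1 X O1] (Sq1 X (F1 Zero1))"
| "bl_rule [Sq2 X O2] (Sq2 X (F2 Zero2))"
| "bl_rule [Sq1 (SMeet1 (F1 A) (F1 B)) X] (Sq1 (F1 (Meet1 A B)) X)"
| "bl_rule [Sq2 (SMeet2 (F2 A) (F2 B)) X] (Sq2 (F2 (Meet2 A B)) X)"
| "bl_rule [Sq1 X (F1 A), Sq1 Y (F1 B)] (Sq1 (SMeet1 X Y) (F1 (Meet1 A B)))"
| "bl_rule [Sq2 X (F2 A), Sq2 Y (F2 B)] (Sq2 (SMeet2 X Y) (F2 (Meet2 A B)))"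
| "bl_rule [Sq1 (F1 A) X, Sq1 (F1 B) Y] (Sq1 (F1 (Join1 A B)) (SJoin1 X Y))"
| "bl_rule [Sq2 (F2 A) X, Sq2 (F2 B) Y] (Sq2 (F2 (Join2 A B)) (SJoin2 X Y))"
| "bl_rule [Sq1 X (SJoin1 (F1 A) (F1 B))] (Sq1 X (F1 (Join1 A B)))"
| "bl_rule [Sq2 X (SJoin2 (F2 A) (F2 B))] (Sq2 X (F2 (Join2 A B)))"
| "bl_rule [Sq1 X1 Y1] (Sq2 (N X1) (N Y1))"
| "bl_rule [Sq2 (N X1) (N Y1)] (Sq1 X1 Y1)"
| "bl_rule [Sq2 X2 Y2] (Sq1 (P X2) (P Y2))"
| "bl_rule [Sq1 (P X2) (P Y2)] (Sq2 X2 Y2)"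
| "bl_rule [Sq1 O1 X1] (Sq1 (P O2) X1)"
| "bl_rule [Sq1 X1 I1] (Sq1 X1 (P I2))"
| "bl_rule [Sq2 (N (F1 A)) X2] (Sq2 (F2 (Nf A)) X2)"
| "bl_rule [Sq2 X2 (N (F1 A))] (Sq2 X2 (F2 (Nf A)))"
| "bl_rule [Sq1 (P (F2 A)) X1] (Sq1 (F1 (Pf A)) X1)"
| "bl_rule [Sq1 X1 (P (F2 A))] (Sq1 X1 (F1 (Pf A)))"

inductive cbl_extra :: "seq list \<Rightarrow> seq \<Rightarrow> bool" where
  "cbl_extra [Sq1 (Star1 X) Y] (Sq1 (Star1 Y) X)"
| "cbl_extra [Sq2 (Star2 X) Y] (Sq2 (Star2 Y) X)"
| "cbl_extra [Sq1 X (Star1 Y)] (Sq1 Y (Star1 X))"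
| "cbl_extra [Sq2 X (Star2 Y)] (Sq2 Y (Star2 X))"
| "cbl_extra [Sq1 X Y] (Sq1 (Star1 Y) (Star1 X))"
| "cbl_extra [Sq1 (Star1 Y) (Star1 X)] (Sq1 X Y)"
| "cbl_extra [Sq2 X Y] (Sq2 (Star2 Y) (Star2 X))"
| "cbl_extra [Sq2 (Star2 Y) (Star2 X)] (Sq2 X Y)"
| "cbl_extra [Sq2 (N (Star1 X1)) Y2] (Sq2 (Star2 (N X1)) Y2)"
| "cbl_extra [Sq2 X2 (N (Star1 Y1))] (Sq2 X2 (Star2 (N Y1)))"
| "cbl_extra [Sq1 (Star1 (F1 A)) Y] (Sq1 (F1 (Neg1 A)) Y)"
| "cbl_extra [Sq2 (Star2 (F2 A)) Y] (Sq2 (F2 (Neg2 A)) Y)"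
| "cbl_extra [Sq1 X (Star1 (F1 A))] (Sq1 X (F1 (Neg1 A)))"
| "cbl_extra [Sq2 X (Star2 (F2 A))] (Sq2 X (F2 (Neg2 A)))"

datatype dtree = Nd seq "dtree list"

fun root :: "dtree \<Rightarrow> seq" where
  "root (Nd s ts) = s"

fun valid :: "(seq list \<Rightarrow> seq \<Rightarrow> bool) \<Rightarrow> dtree \<Rightarrow> bool" where
  "valid R (Nd s ts) = (R (map root ts) s \<and> (\<forall>t\<in>set ts. valid R t))"

fun seqs :: "dtree \<Rightarrow> seq set" where
  "seqs (Nd s ts) = insert s (\<Union>t\<in>set ts. seqs t)"

definition fmls_tree :: "dtree \<Rightarrow> fm set" where
  "fmls_tree T = (\<Union>s\<in>seqs T. fmls_seq s)"

definition DBL_deriv :: "dtree \<Rightarrow> bool" where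
  "DBL_deriv T \<longleftrightarrow> valid (\<lambda>ps c. bl_rule ps c \<or> cut_rule ps c) T \<and> (\<forall>s\<in>seqs T. bl_seq s)"

definition DBL_cutfree :: "dtree \<Rightarrow> bool" where
  "DBL_cutfree T \<longleftrightarrow> valid bl_rule T \<and> (\<forall>s\<in>seqs T. bl_seq s)"

definition DCBL_deriv :: "dtree \<Rightarrow> bool" where
  "DCBL_deriv T \<longleftrightarrow> valid (\<lambda>ps c. bl_rule ps c \<or> cbl_extra ps c \<or> cut_rule ps c) T"

definition DCBL_cutfree :: "dtree \<Rightarrow> bool" where
  "DCBL_cutfree T \<longleftrightarrow> valid (\<lambda>ps c. bl_rule ps c \<or> cbl_extra ps c) T"

end

theory Submission
  imports Defs
begin


definition Rb :: "bool \<Rightarrow> seq list \<Rightarrow> seq \<Rightarrow> bool" where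
  "Rb b ps s \<longleftrightarrow> bl_rule ps s \<or> (b \<and> cbl_extra ps s)"

inductive D :: "bool \<Rightarrow> seq \<Rightarrow> bool" for b where
  Dstep: "Rb b ps s \<Longrightarrow> (\<forall>p\<in>set ps. D b p) \<Longrightarrow> D b s"

lemma Dbl: "bl_rule ps s \<Longrightarrow> (\<forall>p\<in>set ps. D b p) \<Longrightarrow> D b s"
  by (rule Dstep) (auto simp: Rb_def)

inductive sim1 and sim2
  for tgt :: bool and A1 :: fm1 and A2 :: fm2 and u1 :: st1 and u2 :: st2 where
  "sim1 tgt A1 A2 u1 u2 b (F1 B) (F1 B)"
| "b = tgt \<Longrightarrow> sim1 tgt A1 A2 u1 u2 b (F1 A1) u1"
| "sim1 tgt A1 A2 u1 u2 b I1 I1"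
| "sim1 tgt A1 A2 u1 u2 b O1 O1"
| "sim2 tgt A1 A2 u1 u2 b X X' \<Longrightarrow> sim1 tgt A1 A2 u1 u2 b (P X) (P X')"
| "sim1 tgt A1 A2 u1 u2 b X X' \<Longrightarrow> sim1 tgt A1 A2 u1 u2 b Y Y' \<Longrightarrow> sim1 tgt A1 A2 u1 u2 b (SMeet1 X Y) (SMeet1 X' Y')"
| "sim1 tgt A1 A2 u1 u2 b X X' \<Longrightarrow> sim1 tgt A1 A2 u1 u2 b Y Y' \<Longrightarrow> sim1 tgt A1 A2 u1 u2 b (SJoin1 X Y) (SJoin1 X' Y')"
| "sim1 tgt A1 A2 u1 u2 (\<not>b) X X' \<Longrightarrow> sim1 tgt A1 A2 u1 u2 b Y Y' \<Longrightarrow> sim1 tgt A1 A2 u1 u2 b (SImp1 X Y) (SImp1 X' Y')"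
| "sim1 tgt A1 A2 u1 u2 b X X' \<Longrightarrow> sim1 tgt A1 A2 u1 u2 (\<not>b) Y Y' \<Longrightarrow> sim1 tgt A1 A2 u1 u2 b (SDif1 X Y) (SDif1 X' Y')"
| "sim1 tgt A1 A2 u1 u2 (\<not>b) X X' \<Longrightarrow> sim1 tgt A1 A2 u1 u2 b (Star1 X) (Star1 X')"
| "sim2 tgt A1 A2 u1 u2 b (F2 B) (F2 B)"
| "b = tgt \<Longrightarrow> sim2 tgt A1 A2 u1 u2 b (F2 A2) u2"
| "sim2 tgt A1 A2 u1 u2 b I2 I2"
| "sim2 tgt A1 A2 u1 u2 b O2 O2"
| "sim1 tgt A1 A2 u1 u2 b X X' \<Longrightarrow> sim2 tgt A1 A2 u1 u2 b (N X) (N X')"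
| "sim2 tgt A1 A2 u1 u2 b X X' \<Longrightarrow> sim2 tgt A1 A2 u1 u2 b Y Y' \<Longrightarrow> sim2 tgt A1 A2 u1 u2 b (SMeet2 X Y) (SMeet2 X' Y')"
| "sim2 tgt A1 A2 u1 u2 b X X' \<Longrightarrow> sim2 tgt A1 A2 u1 u2 b Y Y' \<Longrightarrow> sim2 tgt A1 A2 u1 u2 b (SJoin2 X Y) (SJoin2 X' Y')"
| "sim2 tgt A1 A2 u1 u2 (\<not>b) X X' \<Longrightarrow> sim2 tgt A1 A2 u1 u2 b Y Y' \<Longrightarrow> sim2 tgt A1 A2 u1 u2 b (SImp2 X Y) (SImp2 X' Y')"
| "sim2 tgt A1 A2 u1 u2 b X X' \<Longrightarrow> sim2 tgt A1 A2 u1 u2 (\<not>b) Y Y' \<Longrightarrow> sim2 tgt A1 A2 u1 u2 b (SDif2 X Y) (SDif2 X' Y')"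
| "sim2 tgt A1 A2 u1 u2 (\<not>b) X X' \<Longrightarrow> sim2 tgt A1 A2 u1 u2 b (Star2 X) (Star2 X')"

lemma sim_refl: "sim1 t A1 A2 u1 u2 b X X" "sim2 t A1 A2 u1 u2 c Y Y"
  by (induction X and Y arbitrary: b and c) (auto intro: sim1_sim2.intros)

lemma sim1_simps:
  "sim1 t A1 A2 u1 u2 b (F1 B) Z \<longleftrightarrow> Z = F1 B \<or> (b = t \<and> B = A1 \<and> Z = u1)"
  "sim1 t A1 A2 u1 u2 b I1 Z \<longleftrightarrow> Z = I1"
  "sim1 t A1 A2 u1 u2 b O1 Z \<longleftrightarrow> Z = O1"
  "sim1 t A1 A2 u1 u2 b (P Q) Z \<longleftrightarrow> (\<exists>Q'. Z = P Q' \<and> sim2 t A1 A2 u1 u2 b Q Q')"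
  "sim1 t A1 A2 u1 u2 b (SMeet1 X Y) Z \<longleftrightarrow> (\<exists>X' Y'. Z = SMeet1 X' Y' \<and> sim1 t A1 A2 u1 u2 b X X' \<and> sim1 t A1 A2 u1 u2 b Y Y')"
  "sim1 t A1 A2 u1 u2 b (SJoin1 X Y) Z \<longleftrightarrow> (\<exists>X' Y'. Z = SJoin1 X' Y' \<and> sim1 t A1 A2 u1 u2 b X X' \<and> sim1 t A1 A2 u1 u2 b Y Y')"
  "sim1 t A1 A2 u1 u2 b (SImp1 X Y) Z \<longleftrightarrow> (\<exists>X' Y'. Z = SImp1 X' Y' \<and> sim1 t A1 A2 u1 u2 (\<not>b) X X' \<and> sim1 t A1 A2 u1 u2 b Y Y')"
  "sim1 t A1 A2 u1 u2 b (SDif1 X Y) Z \<longleftrightarrow> (\<exists>X' Y'. Z = SDif1 X' Y' \<and> sim1 t A1 A2 u1 u2 b X X' \<and> sim1 t A1 A2 u1 u2 (\<not>b) Y Y')"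
  "sim1 t A1 A2 u1 u2 b (Star1 X) Z \<longleftrightarrow> (\<exists>X'. Z = Star1 X' \<and> sim1 t A1 A2 u1 u2 (\<not>b) X X')"
  "sim2 t A1 A2 u1 u2 b (F2 C) W \<longleftrightarrow> W = F2 C \<or> (b = t \<and> C = A2 \<and> W = u2)"
  "sim2 t A1 A2 u1 u2 b I2 W \<longleftrightarrow> W = I2"
  "sim2 t A1 A2 u1 u2 b O2 W \<longleftrightarrow> W = O2"
  "sim2 t A1 A2 u1 u2 b (N X1) W \<longleftrightarrow> (\<exists>X'. W = N X' \<and> sim1 t A1 A2 u1 u2 b X1 X')"
  "sim2 t A1 A2 u1 u2 b (SMeet2 U V) W \<longleftrightarrow> (\<exists>X' Y'. W = SMeet2 X' Y' \<and> sim2 t A1 A2 u1 u2 b U X' \<and> sim2 t A1 A2 u1 u2 b V Y')"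
  "sim2 t A1 A2 u1 u2 b (SJoin2 U V) W \<longleftrightarrow> (\<exists>X' Y'. W = SJoin2 X' Y' \<and> sim2 t A1 A2 u1 u2 b U X' \<and> sim2 t A1 A2 u1 u2 b V Y')"
  "sim2 t A1 A2 u1 u2 b (SImp2 U V) W \<longleftrightarrow> (\<exists>X' Y'. W = SImp2 X' Y' \<and> sim2 t A1 A2 u1 u2 (\<not>b) U X' \<and> sim2 t A1 A2 u1 u2 b V Y')"
  "sim2 t A1 A2 u1 u2 b (SDif2 U V) W \<longleftrightarrow> (\<exists>X' Y'. W = SDif2 X' Y' \<and> sim2 t A1 A2 u1 u2 b U X' \<and> sim2 t A1 A2 u1 u2 (\<not>b) V Y')"
  "sim2 t A1 A2 u1 u2 b (Star2 U) W \<longleftrightarrow> (\<exists>X'. W = Star2 X' \<and> sim2 t A1 A2 u1 u2 (\<not>b) U X')"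
  by (auto elim: sim1.cases sim2.cases intro: sim1_sim2.intros)

fun simS where
  "simS t A1 A2 u1 u2 (Sq1 X Y) s' = (\<exists>X' Y'. s' = Sq1 X' Y' \<and> sim1 t A1 A2 u1 u2 True X X' \<and> sim1 t A1 A2 u1 u2 False Y Y')"
| "simS t A1 A2 u1 u2 (Sq2 X Y) s' = (\<exists>X' Y'. s' = Sq2 X' Y' \<and> sim2 t A1 A2 u1 u2 True X X' \<and> sim2 t A1 A2 u1 u2 False Y Y')"

inductive lrule :: "bool \<Rightarrow> seq list \<Rightarrow> seq \<Rightarrow> bool" for b where
  "lrule b [] (Sq1 (F1 (At1 p)) (F1 (At1 p)))"
| "lrule b [] (Sq2 (F2 (At2 p)) (F2 (At2 p)))"
| "lrule b [Sq1 I1 X] (Sq1 (F1 One1) X)"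
| "lrule b [Sq2 I2 X] (Sq2 (F2 One2) X)"
| "lrule b [] (Sq1 (F1 Zero1) O1)"
| "lrule b [] (Sq2 (F2 Zero2) O2)"
| "lrule b [Sq1 (SMeet1 (F1 A) (F1 B)) X] (Sq1 (F1 (Meet1 A B)) X)"
| "lrule b [Sq2 (SMeet2 (F2 A) (F2 B)) X] (Sq2 (F2 (Meet2 A B)) X)"
| "lrule b [Sq1 (F1 A) X, Sq1 (F1 B) Y] (Sq1 (F1 (Join1 A B)) (SJoin1 X Y))"
| "lrule b [Sq2 (F2 A) X, Sq2 (F2 B) Y] (Sq2 (F2 (Join2 A B)) (SJoin2 X Y))"
| "lrule b [Sq2 (N (F1 A)) X2] (Sq2 (F2 (Nf A)) X2)"
| "lrule b [Sq1 (P (F2 A)) X1] (Sq1 (F1 (Pf A)) X1)"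
| "b \<Longrightarrow> lrule b [Sq1 (Star1 (F1 A)) Y] (Sq1 (F1 (Neg1 A)) Y)"
| "b \<Longrightarrow> lrule b [Sq2 (Star2 (F2 A)) Y] (Sq2 (F2 (Neg2 A)) Y)"

inductive rrule :: "bool \<Rightarrow> seq list \<Rightarrow> seq \<Rightarrow> bool" for b where
  "rrule b [] (Sq1 (F1 (At1 p)) (F1 (At1 p)))"
| "rrule b [] (Sq2 (F2 (At2 p)) (F2 (At2 p)))"
| "rrule b [] (Sq1 I1 (F1 One1))"
| "rrule b [] (Sq2 I2 (F2 One2))"
| "rrule b [Sq1 X O1] (Sq1 X (F1 Zero1))"
| "rrule b [Sq2 X O2] (Sq2 X (F2 Zero2))"
| "rrule b [Sq1 X (F1 A), Sq1 Y (F1 B)] (Sq1 (SMeet1 X Y) (F1 (Meet1 A B)))"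
| "rrule b [Sq2 X (F2 A), Sq2 Y (F2 B)] (Sq2 (SMeet2 X Y) (F2 (Meet2 A B)))"
| "rrule b [Sq1 X (SJoin1 (F1 A) (F1 B))] (Sq1 X (F1 (Join1 A B)))"
| "rrule b [Sq2 X (SJoin2 (F2 A) (F2 B))] (Sq2 X (F2 (Join2 A B)))"
| "rrule b [Sq2 X2 (N (F1 A))] (Sq2 X2 (F2 (Nf A)))"
| "rrule b [Sq1 X1 (P (F2 A))] (Sq1 X1 (F1 (Pf A)))"
| "b \<Longrightarrow> rrule b [Sq1 X (Star1 (F1 A))] (Sq1 X (F1 (Neg1 A)))"
| "b \<Longrightarrow> rrule b [Sq2 X (Star2 (F2 A))] (Sq2 X (F2 (Neg2 A)))"

lemma lrule_Rb: "lrule b ps s \<Longrightarrow> Rb b ps s"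
  by (induction rule: lrule.induct) (auto simp: Rb_def intro: bl_rule.intros cbl_extra.intros)
lemma rrule_Rb: "rrule b ps s \<Longrightarrow> Rb b ps s"
  by (induction rule: rrule.induct) (auto simp: Rb_def intro: bl_rule.intros cbl_extra.intros)

definition closed where
 "closed b t A1 A2 u1 u2 ps s s' \<longleftrightarrow> (\<exists>ps'. list_all2 (simS t A1 A2 u1 u2) ps ps' \<and>
    (Rb b ps' s'
     \<or> (t \<and> (\<exists>Y'. s' = Sq1 u1 Y' \<and> lrule b ps' (Sq1 (F1 A1) Y')))
     \<or> (t \<and> (\<exists>Y'. s' = Sq2 u2 Y' \<and> lrule b ps' (Sq2 (F2 A2) Y')))
     \<or> (\<not>t \<and> (\<exists>X'. s' = Sq1 X' u1 \<and> rrule b ps' (Sq1 X' (F1 A1))))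
     \<or> (\<not>t \<and> (\<exists>X'. s' = Sq2 X' u2 \<and> rrule b ps' (Sq2 X' (F2 A2))))))"

lemma closure_bl:
  assumes "bl_rule ps s" "simS t A1 A2 u1 u2 s s'"
  shows "closed b t A1 A2 u1 u2 ps s s'"
  using assms
  apply (induction rule: bl_rule.cases)
  apply (simp_all add: sim1_simps closed_def)
  apply (fastforce simp: sim1_simps Rb_def intro: bl_rule.intros lrule.intros rrule.intros sim_refl)+
  done


lemma closure_cbl:
  assumes "cbl_extra ps s" "b" "simS t A1 A2 u1 u2 s s'"
  shows "closed b t A1 A2 u1 u2 ps s s'"
  using assms
  apply (induction rule: cbl_extra.cases)
  apply (simp_all add: sim1_simps closed_def)
  apply (fastforce simp: sim1_simps Rb_def intro: cbl_extra.intros lrule.intros rrule.intros sim_refl)+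
  done

lemma closure:
  "Rb b ps s \<Longrightarrow> simS t A1 A2 u1 u2 s s' \<Longrightarrow> closed b t A1 A2 u1 u2 ps s s'"
  unfolding Rb_def using closure_bl closure_cbl by blast

lemma la2_set: "list_all2 R xs ys \<Longrightarrow> y \<in> set ys \<Longrightarrow> \<exists>x\<in>set xs. R x y"
proof (induction xs arbitrary: ys)
  case Nil thus ?case by simp
next
  case (Cons a xs)
  then obtain z zs where "ys = z#zs" "R a z" "list_all2 R xs zs" by (auto simp: list_all2_Cons1)
  thus ?case using Cons by auto
qed



fun cutF :: "bool \<Rightarrow> fm \<Rightarrow> bool" where
  "cutF b (T1 A) = (\<forall>X Y. D b (Sq1 X (F1 A)) \<longrightarrow> D b (Sq1 (F1 A) Y) \<longrightarrow> D b (Sq1 X Y))"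
| "cutF b (T2 A) = (\<forall>X Y. D b (Sq2 X (F2 A)) \<longrightarrow> D b (Sq2 (F2 A) Y) \<longrightarrow> D b (Sq2 X Y))"

lemma cut1D: "cutF b (T1 A) \<Longrightarrow> D b (Sq1 X (F1 A)) \<Longrightarrow> D b (Sq1 (F1 A) Y) \<Longrightarrow> D b (Sq1 X Y)" by simp
lemma cut2D: "cutF b (T2 A) \<Longrightarrow> D b (Sq2 X (F2 A)) \<Longrightarrow> D b (Sq2 (F2 A) Y) \<Longrightarrow> D b (Sq2 X Y)" by simp

fun imm :: "fm \<Rightarrow> fm set" where
  "imm (T1 (Pf A)) = {T2 A}"
| "imm (T1 (Meet1 A B)) = {T1 A, T1 B}"
| "imm (T1 (Join1 A B)) = {T1 A, T1 B}"
| "imm (T1 (Neg1 A)) = {T1 A}"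
| "imm (T2 (Nf A)) = {T1 A}"
| "imm (T2 (Meet2 A B)) = {T2 A, T2 B}"
| "imm (T2 (Join2 A B)) = {T2 A, T2 B}"
| "imm (T2 (Neg2 A)) = {T2 A}"
| "imm _ = {}"

lemma D1: "bl_rule [p] s \<Longrightarrow> D b p \<Longrightarrow> D b s"
  by (rule Dbl) auto
lemma Dc1: "b \<Longrightarrow> cbl_extra [p] s \<Longrightarrow> D b p \<Longrightarrow> D b s"
  by (rule Dstep[of b "[p]"]) (auto simp: Rb_def)

lemmas BR = bl_rule.intros
lemmas CR = cbl_extra.intros

lemma princ1:
  assumes r: "rrule b ps1 (Sq1 X (F1 A))" and d1: "\<forall>p\<in>set ps1. D b p"
  and l: "lrule b ps2 (Sq1 (F1 A) Y)" and d2: "\<forall>p\<in>set ps2. D b p"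
  and c: "\<forall>F\<in>imm (T1 A). cutF b F"
  shows "D b (Sq1 X Y)"
  using r
proof (cases rule: rrule.cases)
  case (1 p) from l 1 show ?thesis by (cases rule: lrule.cases) (auto intro: Dbl[OF BR(13)])
next
  case 3 from l 3 d2 show ?thesis by (cases rule: lrule.cases) auto
next
  case 5 from l 5 d1 show ?thesis by (cases rule: lrule.cases) auto
next
  case (7 X1 A' X2 B')
  from l 7 have ps2: "ps2 = [Sq1 (SMeet1 (F1 A') (F1 B')) Y]" by (cases rule: lrule.cases) auto
  have cA: "cutF b (T1 A')" and cB: "cutF b (T1 B')" using c 7 by (simp del: cutF.simps)+
  have a: "D b (Sq1 X1 (F1 A'))" "D b (Sq1 X2 (F1 B'))" using d1 7 by auto
  have "D b (Sq1 (F1 A') (SImp1 (F1 B') Y))" using d2 ps2 by (intro D1[OF BR(1)]) auto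
  with cA a(1) have "D b (Sq1 X1 (SImp1 (F1 B') Y))" by (rule cut1D)
  then have "D b (Sq1 (SMeet1 X1 (F1 B')) Y)" by (rule D1[OF BR(2)])
  then have "D b (Sq1 (SMeet1 (F1 B') X1) Y)" by (rule D1[OF BR(19)])
  then have "D b (Sq1 (F1 B') (SImp1 X1 Y))" by (rule D1[OF BR(1)])
  with cB a(2) have "D b (Sq1 X2 (SImp1 X1 Y))" by (rule cut1D)
  then have "D b (Sq1 (SMeet1 X2 X1) Y)" by (rule D1[OF BR(2)])
  then have "D b (Sq1 (SMeet1 X1 X2) Y)" by (rule D1[OF BR(19)])
  then show ?thesis using 7 by simp
next
  case (9 A' B')
  from l 9 obtain Y1 Y2 where ps2: "ps2 = [Sq1 (F1 A') Y1, Sq1 (F1 B') Y2]" "Y = SJoin1 Y1 Y2"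
    by (cases rule: lrule.cases) auto
  have cA: "cutF b (T1 A')" and cB: "cutF b (T1 B')" using c 9 by (simp del: cutF.simps)+
  have a: "D b (Sq1 (F1 A') Y1)" "D b (Sq1 (F1 B') Y2)" using d2 ps2 by auto
  have "D b (Sq1 X (SJoin1 (F1 A') (F1 B')))" using d1 9 by auto
  then have "D b (Sq1 (SDif1 X (F1 A')) (F1 B'))" by (rule D1[OF BR(5)])
  from cB this a(2) have "D b (Sq1 (SDif1 X (F1 A')) Y2)" by (rule cut1D)
  then have "D b (Sq1 X (SJoin1 (F1 A') Y2))" by (rule D1[OF BR(6)])
  then have "D b (Sq1 X (SJoin1 Y2 (F1 A')))" by (rule D1[OF BR(21)])
  then have "D b (Sq1 (SDif1 X Y2) (F1 A'))" by (rule D1[OF BR(5)])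
  from cA this a(1) have "D b (Sq1 (SDif1 X Y2) Y1)" by (rule cut1D)
  then have "D b (Sq1 X (SJoin1 Y2 Y1))" by (rule D1[OF BR(6)])
  then have "D b (Sq1 X (SJoin1 Y1 Y2))" by (rule D1[OF BR(21)])
  then show ?thesis using ps2 by simp
next
  case (12 A')
  from l 12 have ps2: "ps2 = [Sq1 (P (F2 A')) Y]" by (cases rule: lrule.cases) auto
  have cA: "cutF b (T2 A')" using c 12 by (simp del: cutF.simps)+
  have "D b (Sq1 X (P (F2 A')))" using d1 12 by auto
  then have x: "D b (Sq2 (N X) (F2 A'))" by (rule D1[OF BR(12)])
  have "D b (Sq1 (P (F2 A')) Y)" using d2 ps2 by auto
  then have "D b (Sq2 (F2 A') (N Y))" by (rule D1[OF BR(9)])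
  from cA x this have "D b (Sq2 (N X) (N Y))" by (rule cut2D)
  then show ?thesis by (rule D1[OF BR(52)])
next
  case (13 A')
  from l 13 have ps2: "ps2 = [Sq1 (Star1 (F1 A')) Y]" by (cases rule: lrule.cases) auto
  have cA: "cutF b (T1 A')" using c 13 by (simp del: cutF.simps)+
  have "D b (Sq1 X (Star1 (F1 A')))" using d1 13 by auto
  then have x: "D b (Sq1 (F1 A') (Star1 X))" by (rule Dc1[OF \<open>b\<close> CR(3)])
  have "D b (Sq1 (Star1 (F1 A')) Y)" using d2 ps2 by auto
  then have "D b (Sq1 (Star1 Y) (F1 A'))" by (rule Dc1[OF \<open>b\<close> CR(1)])
  from cA this x have "D b (Sq1 (Star1 Y) (Star1 X))" by (rule cut1D)
  then show ?thesis by (rule Dc1[OF \<open>b\<close> CR(6)])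
qed

lemma princ2:
  assumes r: "rrule b ps1 (Sq2 X (F2 A))" and d1: "\<forall>p\<in>set ps1. D b p"
  and l: "lrule b ps2 (Sq2 (F2 A) Y)" and d2: "\<forall>p\<in>set ps2. D b p"
  and c: "\<forall>F\<in>imm (T2 A). cutF b F"
  shows "D b (Sq2 X Y)"
  using r
proof (cases rule: rrule.cases)
  case (2 p) from l 2 show ?thesis by (cases rule: lrule.cases) (auto intro: Dbl[OF BR(14)])
next
  case 4 from l 4 d2 show ?thesis by (cases rule: lrule.cases) auto
next
  case 6 from l 6 d1 show ?thesis by (cases rule: lrule.cases) auto
next
  case (8 X1 A' X2 B')
  from l 8 have ps2: "ps2 = [Sq2 (SMeet2 (F2 A') (F2 B')) Y]" by (cases rule: lrule.cases) auto
  have cA: "cutF b (T2 A')" and cB: "cutF b (T2 B')" using c 8 by (simp del: cutF.simps)+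
  have a: "D b (Sq2 X1 (F2 A'))" "D b (Sq2 X2 (F2 B'))" using d1 8 by auto
  have "D b (Sq2 (F2 A') (SImp2 (F2 B') Y))" using d2 ps2 by (intro D1[OF BR(3)]) auto
  with cA a(1) have "D b (Sq2 X1 (SImp2 (F2 B') Y))" by (rule cut2D)
  then have "D b (Sq2 (SMeet2 X1 (F2 B')) Y)" by (rule D1[OF BR(4)])
  then have "D b (Sq2 (SMeet2 (F2 B') X1) Y)" by (rule D1[OF BR(20)])
  then have "D b (Sq2 (F2 B') (SImp2 X1 Y))" by (rule D1[OF BR(3)])
  with cB a(2) have "D b (Sq2 X2 (SImp2 X1 Y))" by (rule cut2D)
  then have "D b (Sq2 (SMeet2 X2 X1) Y)" by (rule D1[OF BR(4)])
  then have "D b (Sq2 (SMeet2 X1 X2) Y)" by (rule D1[OF BR(20)])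
  then show ?thesis using 8 by simp
next
  case (10 A' B')
  from l 10 obtain Y1 Y2 where ps2: "ps2 = [Sq2 (F2 A') Y1, Sq2 (F2 B') Y2]" "Y = SJoin2 Y1 Y2"
    by (cases rule: lrule.cases) auto
  have cA: "cutF b (T2 A')" and cB: "cutF b (T2 B')" using c 10 by (simp del: cutF.simps)+
  have a: "D b (Sq2 (F2 A') Y1)" "D b (Sq2 (F2 B') Y2)" using d2 ps2 by auto
  have "D b (Sq2 X (SJoin2 (F2 A') (F2 B')))" using d1 10 by auto
  then have "D b (Sq2 (SDif2 X (F2 A')) (F2 B'))" by (rule D1[OF BR(7)])
  from cB this a(2) have "D b (Sq2 (SDif2 X (F2 A')) Y2)" by (rule cut2D)
  then have "D b (Sq2 X (SJoin2 (F2 A') Y2))" by (rule D1[OF BR(8)])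
  then have "D b (Sq2 X (SJoin2 Y2 (F2 A')))" by (rule D1[OF BR(22)])
  then have "D b (Sq2 (SDif2 X Y2) (F2 A'))" by (rule D1[OF BR(7)])
  from cA this a(1) have "D b (Sq2 (SDif2 X Y2) Y1)" by (rule cut2D)
  then have "D b (Sq2 X (SJoin2 Y2 Y1))" by (rule D1[OF BR(8)])
  then have "D b (Sq2 X (SJoin2 Y1 Y2))" by (rule D1[OF BR(22)])
  then show ?thesis using ps2 by simp
next
  case (11 A')
  from l 11 have ps2: "ps2 = [Sq2 (N (F1 A')) Y]" by (cases rule: lrule.cases) auto
  have cA: "cutF b (T1 A')" using c 11 by (simp del: cutF.simps)
  have "D b (Sq2 X (N (F1 A')))" using d1 11 by auto
  then have x: "D b (Sq1 (P X) (F1 A'))" by (rule D1[OF BR(10)])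
  have "D b (Sq2 (N (F1 A')) Y)" using d2 ps2 by auto
  then have "D b (Sq1 (F1 A') (P Y))" by (rule D1[OF BR(11)])
  from cA x this have "D b (Sq1 (P X) (P Y))" by (rule cut1D)
  then show ?thesis by (rule D1[OF BR(54)])
next
  case (14 A')
  from l 14 have ps2: "ps2 = [Sq2 (Star2 (F2 A')) Y]" by (cases rule: lrule.cases) auto
  have cA: "cutF b (T2 A')" using c 14 by (simp del: cutF.simps)
  have "D b (Sq2 X (Star2 (F2 A')))" using d1 14 by auto
  then have x: "D b (Sq2 (F2 A') (Star2 X))" by (rule Dc1[OF \<open>b\<close> CR(4)])
  have "D b (Sq2 (Star2 (F2 A')) Y)" using d2 ps2 by auto
  then have "D b (Sq2 (Star2 Y) (F2 A'))" by (rule Dc1[OF \<open>b\<close> CR(2)])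
  from cA this x have "D b (Sq2 (Star2 Y) (Star2 X))" by (rule cut2D)
  then show ?thesis by (rule Dc1[OF \<open>b\<close> CR(8)])
qed

definition PL1 where "PL1 b A y \<longleftrightarrow> (\<exists>ps. lrule b ps (Sq1 (F1 A) y) \<and> (\<forall>p\<in>set ps. D b p))"
definition PL2 where "PL2 b A y \<longleftrightarrow> (\<exists>ps. lrule b ps (Sq2 (F2 A) y) \<and> (\<forall>p\<in>set ps. D b p))"

lemma succ:
  assumes "D b s" "simS False A1 A2 y1 y2 s s'"
  and h1: "y1 = F1 A1 \<or> (PL1 b A1 y1 \<and> (\<forall>F\<in>imm (T1 A1). cutF b F))"
  and h2: "y2 = F2 A2 \<or> (PL2 b A2 y2 \<and> (\<forall>F\<in>imm (T2 A2). cutF b F))"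
  shows "D b s'"
  using assms(1,2)
proof (induction arbitrary: s' rule: D.induct)
  case (Dstep ps s)
  from closure[OF Dstep(1) Dstep(3)] obtain ps' where
    la: "list_all2 (simS False A1 A2 y1 y2) ps ps'" and
    cs: "Rb b ps' s' \<or> (\<exists>X'. s' = Sq1 X' y1 \<and> rrule b ps' (Sq1 X' (F1 A1)))
        \<or> (\<exists>X'. s' = Sq2 X' y2 \<and> rrule b ps' (Sq2 X' (F2 A2)))"
    unfolding closed_def by auto
  have dps: "\<forall>p\<in>set ps'. D b p"
  proof
    fix p' assume "p' \<in> set ps'"
    then obtain p where "p \<in> set ps" "simS False A1 A2 y1 y2 p p'" using la2_set[OF la] by blast
    then show "D b p'" using Dstep(2) by blast
  qed
  from cs show ?case
  proof (elim disjE exE conjE)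
    assume "Rb b ps' s'" then show ?thesis using dps by (rule D.Dstep)
  next
    fix X' assume s': "s' = Sq1 X' y1" and r: "rrule b ps' (Sq1 X' (F1 A1))"
    from h1 show ?thesis
    proof
      assume "y1 = F1 A1" then show ?thesis using s' r dps by (auto intro: D.Dstep rrule_Rb)
    next
      assume "PL1 b A1 y1 \<and> (\<forall>F\<in>imm (T1 A1). cutF b F)"
      then show ?thesis using s' princ1[OF r dps] unfolding PL1_def by blast
    qed
  next
    fix X' assume s': "s' = Sq2 X' y2" and r: "rrule b ps' (Sq2 X' (F2 A2))"
    from h2 show ?thesis
    proof
      assume "y2 = F2 A2" then show ?thesis using s' r dps by (auto intro: D.Dstep rrule_Rb)
    next
      assume "PL2 b A2 y2 \<and> (\<forall>F\<in>imm (T2 A2). cutF b F)"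
      then show ?thesis using s' princ2[OF r dps] unfolding PL2_def by blast
    qed
  qed
qed

lemma ant:
  assumes "D b s" "simS True A1 A2 x1 x2 s s'"
  and h1: "x1 = F1 A1 \<or> (D b (Sq1 x1 (F1 A1)) \<and> (\<forall>F\<in>imm (T1 A1). cutF b F))"
  and h2: "x2 = F2 A2 \<or> (D b (Sq2 x2 (F2 A2)) \<and> (\<forall>F\<in>imm (T2 A2). cutF b F))"
  shows "D b s'"
  using assms(1,2)
proof (induction arbitrary: s' rule: D.induct)
  case (Dstep ps s)
  from closure[OF Dstep(1) Dstep(3)] obtain ps' where
    la: "list_all2 (simS True A1 A2 x1 x2) ps ps'" and
    cs: "Rb b ps' s' \<or> (\<exists>Y'. s' = Sq1 x1 Y' \<and> lrule b ps' (Sq1 (F1 A1) Y'))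
        \<or> (\<exists>Y'. s' = Sq2 x2 Y' \<and> lrule b ps' (Sq2 (F2 A2) Y'))"
    unfolding closed_def by auto
  have dps: "\<forall>p\<in>set ps'. D b p"
  proof
    fix p' assume "p' \<in> set ps'"
    then obtain p where "p \<in> set ps" "simS True A1 A2 x1 x2 p p'" using la2_set[OF la] by blast
    then show "D b p'" using Dstep(2) by blast
  qed
  from cs show ?case
  proof (elim disjE exE conjE)
    assume "Rb b ps' s'" then show ?thesis using dps by (rule D.Dstep)
  next
    fix Y' assume s': "s' = Sq1 x1 Y'" and r: "lrule b ps' (Sq1 (F1 A1) Y')"
    from h1 show ?thesis
    proof
      assume "x1 = F1 A1" then show ?thesis using s' r dps by (auto intro: D.Dstep lrule_Rb)
    next
      assume a: "D b (Sq1 x1 (F1 A1)) \<and> (\<forall>F\<in>imm (T1 A1). cutF b F)"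
      have "simS False A1 A2 Y' (F2 A2) (Sq1 x1 (F1 A1)) (Sq1 x1 Y')"
        by (auto simp: sim1_simps sim_refl)
      from succ[OF conjunct1[OF a] this] show ?thesis using a r dps s' unfolding PL1_def by blast
    qed
  next
    fix Y' assume s': "s' = Sq2 x2 Y'" and r: "lrule b ps' (Sq2 (F2 A2) Y')"
    from h2 show ?thesis
    proof
      assume "x2 = F2 A2" then show ?thesis using s' r dps by (auto intro: D.Dstep lrule_Rb)
    next
      assume a: "D b (Sq2 x2 (F2 A2)) \<and> (\<forall>F\<in>imm (T2 A2). cutF b F)"
      have "simS False A1 A2 (F1 A1) Y' (Sq2 x2 (F2 A2)) (Sq2 x2 Y')"
        by (auto simp: sim1_simps sim_refl)
      from succ[OF conjunct1[OF a] this] show ?thesis using a r dps s' unfolding PL2_def by blast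
    qed
  qed
qed

fun fsize :: "fm \<Rightarrow> nat" where
  "fsize (T1 A) = size A" | "fsize (T2 A) = size A"

lemma imm_size: "F \<in> imm G \<Longrightarrow> fsize F < fsize G"
  by (induction G rule: imm.induct) auto

lemma cut_all: "cutF b F"
proof (induction "fsize F" arbitrary: F rule: less_induct)
  case less
  have IH: "\<forall>F'\<in>imm F. cutF b F'" using less imm_size by blast
  show ?case
  proof (cases F)
    case (T1 A)
    show ?thesis unfolding T1 cutF.simps
    proof (intro allI impI)
      fix X Y assume x: "D b (Sq1 X (F1 A))" and y: "D b (Sq1 (F1 A) Y)"
      have sm: "simS True A (At2 0) X (F2 (At2 0)) (Sq1 (F1 A) Y) (Sq1 X Y)"
        by (auto simp: sim1_simps sim_refl)
      show "D b (Sq1 X Y)" by (rule ant[OF y sm]) (use x IH T1 in \<open>simp_all del: cutF.simps\<close>)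
    qed
  next
    case (T2 A)
    show ?thesis unfolding T2 cutF.simps
    proof (intro allI impI)
      fix X Y assume x: "D b (Sq2 X (F2 A))" and y: "D b (Sq2 (F2 A) Y)"
      have sm: "simS True (At1 0) A (F1 (At1 0)) X (Sq2 (F2 A) Y) (Sq2 X Y)"
        by (auto simp: sim1_simps sim_refl)
      show "D b (Sq2 X Y)" by (rule ant[OF y sm]) (use x IH T2 in \<open>simp_all del: cutF.simps\<close>)
    qed
  qed
qed

lemma valid_cut_D: "valid (\<lambda>ps c. Rb b ps c \<or> cut_rule ps c) T \<Longrightarrow> D b (root T)"
proof (induction T)
  case (Nd s ts)
  have r: "Rb b (map root ts) s \<or> cut_rule (map root ts) s" and v: "\<forall>t\<in>set ts. valid (\<lambda>ps c. Rb b ps c \<or> cut_rule ps c) t"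
    using Nd.prems by auto
  have d: "\<forall>p\<in>set (map root ts). D b p" using Nd.IH v by auto
  from r show ?case
  proof
    assume "Rb b (map root ts) s" from D.Dstep[OF this d] show ?thesis by simp
  next
    assume "cut_rule (map root ts) s"
    then show ?thesis
    proof (cases rule: cut_rule.cases)
      case (1 X A Y)
      then show ?thesis using d cut_all[of b "T1 A"] by simp
    next
      case (2 X A Y)
      then show ?thesis using d cut_all[of b "T2 A"] by simp
    qed
  qed
qed

lemma ex_list: "(\<forall>p\<in>set ps. \<exists>t. R p t) \<Longrightarrow> \<exists>ts. list_all2 R ps ts"
  by (induction ps) (auto simp: list_all2_Cons1)

lemma la2_root: "list_all2 (\<lambda>p t. X t \<and> root t = p \<and> Y t) ps ts \<Longrightarrow> map root ts = ps \<and> (\<forall>t\<in>set ts. X t \<and> Y t)"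
proof (induction ps arbitrary: ts)
  case Nil thus ?case by simp
next
  case (Cons p ps)
  from Cons.prems obtain t ts' where ts: "ts = t#ts'" by (cases ts) auto
  with Cons.prems have t: "X t" "root t = p" "Y t"
    and r: "list_all2 (\<lambda>p t. X t \<and> root t = p \<and> Y t) ps ts'" by simp_all
  from Cons.IH[OF r] t ts show ?case by simp
qed

lemma mk_tree:
  assumes "D b s" "Q s" "\<And>ps s. Rb b ps s \<Longrightarrow> Q s \<Longrightarrow> \<forall>p\<in>set ps. Q p"
  shows "\<exists>T. valid (Rb b) T \<and> root T = s \<and> (\<forall>x\<in>seqs T. Q x)"
  using assms(1,2)
proof (induction rule: D.induct)
  case (Dstep ps s)
  have q: "\<forall>p\<in>set ps. Q p" using assms(3)[OF Dstep(1) Dstep(3)] .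
  have "\<forall>p\<in>set ps. \<exists>T. valid (Rb b) T \<and> root T = p \<and> (\<forall>x\<in>seqs T. Q x)"
  proof
    fix p assume p: "p \<in> set ps"
    from Dstep(2) p have "Q p \<longrightarrow> (\<exists>T. valid (Rb b) T \<and> root T = p \<and> (\<forall>x\<in>seqs T. Q x))" by simp
    with q p show "\<exists>T. valid (Rb b) T \<and> root T = p \<and> (\<forall>x\<in>seqs T. Q x)" by simp
  qed
  from ex_list[OF this] obtain ts where "list_all2 (\<lambda>p T. valid (Rb b) T \<and> root T = p \<and> (\<forall>x\<in>seqs T. Q x)) ps ts" ..
  from la2_root[OF this] have m: "map root ts = ps" and v: "\<forall>t\<in>set ts. valid (Rb b) t \<and> (\<forall>x\<in>seqs t. Q x)" by auto
  have "valid (Rb b) (Nd s ts)" using m v Dstep(1) by simp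
  moreover have "\<forall>x\<in>seqs (Nd s ts). Q x" using v Dstep(3) by simp
  ultimately show ?case by (intro exI[of _ "Nd s ts"]) simp
qed

lemma bl_prem: "bl_rule ps s \<Longrightarrow> bl_seq s \<Longrightarrow> \<forall>p\<in>set ps. bl_seq p"
  by (induction rule: bl_rule.cases) auto

definition SUB where "SUB s = (\<Union>A\<in>fmls_seq s. subfm A)"

lemma sub_self: "T1 A \<in> sub1 A" "T2 B \<in> sub2 B"
  by (cases A; simp) (cases B; simp)

lemma fmls_SUB: "fmls_seq s \<subseteq> SUB s"
proof
  fix F assume "F \<in> fmls_seq s" then show "F \<in> SUB s"
    unfolding SUB_def by (cases F) (force intro: sub_self)+
qed

lemma SUB_simps:
  "SUB (Sq1 X Y) = (\<Union>A\<in>fmls1 X. subfm A) \<union> (\<Union>A\<in>fmls1 Y. subfm A)"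
  "SUB (Sq2 U V) = (\<Union>A\<in>fmls2 U. subfm A) \<union> (\<Union>A\<in>fmls2 V. subfm A)"
  by (simp_all add: SUB_def)

lemma sub_bl: "bl_rule ps s \<Longrightarrow> p \<in> set ps \<Longrightarrow> SUB p \<subseteq> SUB s"
  by (erule bl_rule.cases) (auto simp: SUB_simps)

lemma sub_cbl: "cbl_extra ps s \<Longrightarrow> p \<in> set ps \<Longrightarrow> SUB p \<subseteq> SUB s"
  by (erule cbl_extra.cases) (auto simp: SUB_simps)

lemma sub_rule: "Rb b ps s \<Longrightarrow> p \<in> set ps \<Longrightarrow> SUB p \<subseteq> SUB s"
  unfolding Rb_def using sub_bl sub_cbl by blast

lemma sub_tree: "valid (Rb b) T \<Longrightarrow> fmls_tree T \<subseteq> SUB (root T)"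
proof (induction T)
  case (Nd s ts)
  have r: "Rb b (map root ts) s" and v: "\<forall>t\<in>set ts. valid (Rb b) t" using Nd.prems by auto
  have "\<forall>t\<in>set ts. fmls_tree t \<subseteq> SUB s"
  proof
    fix t assume t: "t \<in> set ts"
    have "fmls_tree t \<subseteq> SUB (root t)" using Nd.IH t v by blast
    also have "\<dots> \<subseteq> SUB s" using sub_rule[OF r] t by auto
    finally show "fmls_tree t \<subseteq> SUB s" .
  qed
  moreover have "fmls_tree (Nd s ts) = fmls_seq s \<union> (\<Union>t\<in>set ts. fmls_tree t)"
    unfolding fmls_tree_def by auto
  ultimately show ?case using fmls_SUB by auto
qed

lemma Rb_F: "Rb False = bl_rule" by (auto simp: Rb_def fun_eq_iff)
lemma Rb_T: "Rb True = (\<lambda>ps c. bl_rule ps c \<or> cbl_extra ps c)" by (auto simp: Rb_def fun_eq_iff)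

theorem mainTheorem4:
  shows "(\<forall>T. DBL_deriv T \<longrightarrow> (\<exists>T'. DBL_cutfree T' \<and> root T' = root T))
       \<and> (\<forall>T. DCBL_deriv T \<longrightarrow> (\<exists>T'. DCBL_cutfree T' \<and> root T' = root T))
       \<and> (\<forall>T. DBL_cutfree T \<longrightarrow>
            fmls_tree T \<subseteq> (\<Union>A\<in>fmls_seq (root T). subfm A))
       \<and> (\<forall>T. DCBL_cutfree T \<longrightarrow>
            fmls_tree T \<subseteq> (\<Union>A\<in>fmls_seq (root T). subfm A))"
proof (intro conjI allI impI)
  fix T assume a: "DBL_deriv T"
  have "valid (\<lambda>ps c. Rb False ps c \<or> cut_rule ps c) T" using a by (simp add: DBL_deriv_def Rb_F)
  then have d: "D False (root T)" by (rule valid_cut_D)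
  have "bl_seq (root T)" using a by (cases T) (simp add: DBL_deriv_def)
  from mk_tree[of False "root T" bl_seq, OF d this] obtain T' where
    "valid (Rb False) T' \<and> root T' = root T \<and> (\<forall>x\<in>seqs T'. bl_seq x)"
    using bl_prem by (auto simp: Rb_F)
  then show "\<exists>T'. DBL_cutfree T' \<and> root T' = root T" by (auto simp: DBL_cutfree_def Rb_F)
next
  fix T assume a: "DCBL_deriv T"
  have "valid (\<lambda>ps c. Rb True ps c \<or> cut_rule ps c) T" using a by (simp add: DCBL_deriv_def Rb_T)
  then have d: "D True (root T)" by (rule valid_cut_D)
  from mk_tree[of True "root T" "\<lambda>_. True", OF d] obtain T' where
    "valid (Rb True) T' \<and> root T' = root T" by auto
  then show "\<exists>T'. DCBL_cutfree T' \<and> root T' = root T" by (auto simp: DCBL_cutfree_def Rb_T)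
next
  fix T assume "DBL_cutfree T"
  then have "valid (Rb False) T" by (simp add: DBL_cutfree_def Rb_F)
  from sub_tree[OF this] show "fmls_tree T \<subseteq> (\<Union>A\<in>fmls_seq (root T). subfm A)" by (simp add: SUB_def)
next
  fix T assume "DCBL_cutfree T"
  then have "valid (Rb True) T" by (simp add: DCBL_cutfree_def Rb_T)
  from sub_tree[OF this] show "fmls_tree T \<subseteq> (\<Union>A\<in>fmls_seq (root T). subfm A)" by (simp add: SUB_def)
qed

end
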